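(* Let $n\leq 5$ be a positive integer, let $X_1,\ldots,X_n$ be independent Bernoulli random variables, $S=\sum_{i=1}^n X_i$, and let $Z$ be a Poisson random variable with mean $1$, independent of $S$. Assume that $S+Z$ has a unique mode $m_1$, and let $m_0$ be any mode of $S$. Then $m_1\leq m_0+1$.
   Context: A mode of a random variable $X$ taking values in $\{0,1,2,\ldots\}$ is any integer $m$ at which $k\mapsto\Pr(X=k)$ attains its maximum. The Bernoulli variables may have arbitrary (possibly different) success probabilities. *)

theory Defs
  imports "HOL-Probability.Probability"
begin

definition is_mode :: "nat pmf \<Rightarrow> nat \<Rightarrow> bool" where
  "is_mode q m \<longleftrightarrow> (\<forall>k. pmf q k \<le> pmf q m)"

definition bern_sum_pmf :: "nat \<Rightarrow> (nat \<Rightarrow> real) \<Rightarrow> nat pmf" where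
  "bern_sum_pmf n p =
     map_pmf (\<lambda>x. \<Sum>i<n. of_bool (x i)) (Pi_pmf {..<n} False (\<lambda>i. bernoulli_pmf (p i)))"

definition plus_poisson1_pmf :: "nat pmf \<Rightarrow> nat pmf" where
  "plus_poisson1_pmf S = bind_pmf S (\<lambda>s. map_pmf (\<lambda>z. s + z) (poisson_pmf 1))"

end

theory Submission
  imports Defs
begin


lemma pmf_map_add: "pmf (map_pmf (\<lambda>s. c + s) S) (k::nat) = (if c \<le> k then pmf S (k - c) else 0)"
proof (cases "c \<le> k")
  case True
  then have "k = c + (k - c)" by simp
  then have "pmf (map_pmf (\<lambda>s. c + s) S) k = pmf (map_pmf (\<lambda>s. c + s) S) (c + (k - c))" by simp
  also have "\<dots> = pmf S (k - c)" by (rule pmf_map_inj') (auto simp: inj_def)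
  finally show ?thesis using True by simp
next
  case False
  then have "k \<notin> set_pmf (map_pmf (\<lambda>s. c + s) S)" by auto
  then show ?thesis using False by (simp add: set_pmf_eq)
qed

lemma sum_upd_aux: "(\<Sum>i<Suc n. of_bool ((f(n:=y)) i) :: nat) = of_bool y + (\<Sum>i<n. of_bool (f i))"
proof -
  have "(\<Sum>i<n. of_bool ((f(n:=y)) i)::nat) = (\<Sum>i<n. of_bool (f i))" by (rule sum.cong) auto
  then show ?thesis by (simp only: sum.lessThan_Suc fun_upd_same add.commute)
qed

lemma bern_Suc:
  "bern_sum_pmf (Suc n) p =
     bind_pmf (bernoulli_pmf (p n)) (\<lambda>y. map_pmf (\<lambda>s. of_bool y + s) (bern_sum_pmf n p))"
proof -
  have "bern_sum_pmf (Suc n) p = map_pmf (\<lambda>x. \<Sum>i<Suc n. of_bool (x i))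
     (map_pmf (\<lambda>(y,f). f(n:=y)) (pair_pmf (bernoulli_pmf (p n)) (Pi_pmf {..<n} False (\<lambda>i. bernoulli_pmf (p i)))))"
    unfolding bern_sum_pmf_def lessThan_Suc by (subst Pi_pmf_insert) auto
  also have "\<dots> = map_pmf (\<lambda>(y,f). of_bool y + (\<Sum>i<n. of_bool (f i)))
     (pair_pmf (bernoulli_pmf (p n)) (Pi_pmf {..<n} False (\<lambda>i. bernoulli_pmf (p i))))"
    unfolding pmf.map_comp
    by (intro map_pmf_cong refl) (auto simp only: sum_upd_aux comp_def split: prod.splits)
  also have "\<dots> = bind_pmf (bernoulli_pmf (p n)) (\<lambda>y. map_pmf (\<lambda>s. of_bool y + s) (bern_sum_pmf n p))"
    unfolding pair_pmf_def bern_sum_pmf_def map_bind_pmf bind_map_pmf map_return_pmf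
    by (simp add: map_pmf_def bind_assoc_pmf bind_return_pmf)
  finally show ?thesis .
qed



fun ccq :: "nat \<Rightarrow> (nat \<Rightarrow> real) \<Rightarrow> (nat \<Rightarrow> real) \<Rightarrow> nat \<Rightarrow> real" where
  "ccq 0 P Q k = (if k = 0 then 1 else 0)"
| "ccq (Suc n) P Q k = Q n * ccq n P Q k + (if k = 0 then 0 else P n * ccq n P Q (k - 1))"

lemma pmf_map_Suc: "pmf (map_pmf Suc S) (k::nat) = (if 1 \<le> k then pmf S (k - 1) else 0)"
  using pmf_map_add[of 1 S k] by simp

lemma pmf_bern:
  assumes "\<And>i. i < n \<Longrightarrow> 0 \<le> p i \<and> p i \<le> 1"
  shows "pmf (bern_sum_pmf n p) k = ccq n p (\<lambda>i. 1 - p i) k"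
  using assms
proof (induction n arbitrary: k)
  case 0
  then show ?case by (simp add: bern_sum_pmf_def)
next
  case (Suc n)
  have pn: "0 \<le> p n" "p n \<le> 1" using Suc.prems[of n] by auto
  have IH: "\<And>k. pmf (bern_sum_pmf n p) k = ccq n p (\<lambda>i. 1 - p i) k" using Suc by auto
  have "pmf (bern_sum_pmf (Suc n) p) k =
     (\<Sum>y\<in>UNIV. pmf (map_pmf (\<lambda>s. of_bool y + s) (bern_sum_pmf n p)) k * pmf (bernoulli_pmf (p n)) y)"
    unfolding bern_Suc pmf_bind by (rule integral_measure_pmf_real) auto
  also have "\<dots> = ccq (Suc n) p (\<lambda>i. 1 - p i) k"
    using pn by (cases k) (simp_all add: UNIV_bool pmf_map_add pmf_map_Suc IH algebra_simps)
  finally show ?case .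
qed

lemma ccq_nonneg: "(\<And>i. 0 \<le> P i) \<Longrightarrow> (\<And>i. 0 \<le> Q i) \<Longrightarrow> 0 \<le> ccq n P Q k"
  by (induction n arbitrary: k) auto

lemma ccq_zero: "n < k \<Longrightarrow> ccq n P Q k = 0"
  by (induction n arbitrary: k) auto

lemma ccq_cong: "(\<And>i. i < n \<Longrightarrow> P i = P' i \<and> Q i = Q' i) \<Longrightarrow> ccq n P Q k = ccq n P' Q' k"
  by (induction n arbitrary: k) auto

lemma ccq_pad:
  assumes "n \<le> m" "\<And>i. n \<le> i \<Longrightarrow> P i = 0 \<and> Q i = 1"
  shows "ccq m P Q k = ccq n P Q k"
  using assms(1)
proof (induction m arbitrary: k rule: dec_induct)
  case base then show ?case by simp
next
  case (step m) then show ?case using assms(2)[of m] by simp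
qed

lemma ccq_interval:
  assumes "\<And>i. 0 \<le> P i \<and> P i \<le> 1"
  shows "\<exists>a b. a \<le> b \<and> (\<forall>k. (0 < ccq n P (\<lambda>i. 1 - P i) k \<longleftrightarrow> a \<le> k \<and> k \<le> b))"
proof (induction n)
  case 0
  show ?case by (rule exI[of _ 0], rule exI[of _ 0]) auto
next
  case (Suc n)
  then obtain a b where ab0: "a \<le> b" and ab: "\<And>k. 0 < ccq n P (\<lambda>i. 1 - P i) k \<longleftrightarrow> a \<le> k \<and> k \<le> b" by blast
  let ?c = "ccq n P (\<lambda>i. 1 - P i)"
  have nn: "\<And>k. 0 \<le> ?c k" by (rule ccq_nonneg) (use assms in auto)
  have p: "0 \<le> P n" "P n \<le> 1" using assms by auto
  consider "P n = 0" | "P n = 1" | "0 < P n" "P n < 1" using p by linarith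
  then show ?case
  proof cases
    case 1
    then show ?thesis using ab ab0 by auto
  next
    case 2
    show ?thesis
    proof (intro exI conjI allI)
      fix k
      show "Suc a \<le> Suc b" using ab0 by simp
      show "0 < ccq (Suc n) P (\<lambda>i. 1 - P i) k \<longleftrightarrow> Suc a \<le> k \<and> k \<le> Suc b"
        using 2 ab[of "k - 1"] by (cases k) auto
    qed
  next
    case 3
    show ?thesis
    proof (intro exI conjI allI)
      fix k
      have pos: "0 < ccq (Suc n) P (\<lambda>i. 1 - P i) k \<longleftrightarrow> 0 < ?c k \<or> (k \<noteq> 0 \<and> 0 < ?c (k - 1))"
      proof -
        have e: "ccq (Suc n) P (\<lambda>i. 1 - P i) k = (1 - P n) * ?c k + (if k = 0 then 0 else P n * ?c (k - 1))"
          by simp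
        have A: "0 \<le> (1 - P n) * ?c k" using 3 nn[of k] by simp
        have B: "0 \<le> P n * ?c (k - 1)" using 3 nn[of "k-1"] by simp
        have C: "0 < (1 - P n) * ?c k \<longleftrightarrow> 0 < ?c k" using 3 by (simp add: zero_less_mult_iff)
        have D: "0 < P n * ?c (k - 1) \<longleftrightarrow> 0 < ?c (k - 1)" using 3 by (simp add: zero_less_mult_iff)
        show ?thesis unfolding e using A B C D by auto
      qed
      show "a \<le> Suc b" using ab0 by simp
      show "0 < ccq (Suc n) P (\<lambda>i. 1 - P i) k \<longleftrightarrow> a \<le> k \<and> k \<le> Suc b"
        unfolding pos using ab0 ab[of k] ab[of "k - 1"] by (cases k) auto
    qed
  qed
qed


lemma N1: "ccq 5 P Q 1 ^ 2 - 2 * ccq 5 P Q 0 * ccq 5 P Q 2 = (P 0)^2 * (Q 1)^2 * (Q 2)^2 * (Q 3)^2 * (Q 4)^2 + (P 1)^2 * (Q 0)^2 * (Q 2)^2 * (Q 3)^2 * (Q 4)^2 + (P 2)^2 * (Q 0)^2 * (Q 1)^2 * (Q 3)^2 * (Q 4)^2 + (P 3)^2 * (Q 0)^2 * (Q 1)^2 * (Q 2)^2 * (Q 4)^2 + (P 4)^2 * (Q 0)^2 * (Q 1)^2 * (Q 2)^2 * (Q 3)^2"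
  by (simp add: numeral_eq_Suc) algebra
lemma N4: "ccq 5 P Q 4 ^ 2 - 2 * ccq 5 P Q 3 * ccq 5 P Q 5 = (Q 0)^2 * (P 1)^2 * (P 2)^2 * (P 3)^2 * (P 4)^2 + (Q 1)^2 * (P 0)^2 * (P 2)^2 * (P 3)^2 * (P 4)^2 + (Q 2)^2 * (P 0)^2 * (P 1)^2 * (P 3)^2 * (P 4)^2 + (Q 3)^2 * (P 0)^2 * (P 1)^2 * (P 2)^2 * (P 4)^2 + (Q 4)^2 * (P 0)^2 * (P 1)^2 * (P 2)^2 * (P 3)^2"
  by (simp add: numeral_eq_Suc) algebra
lemma N2: "ccq 5 P Q 2 ^ 2 - 2 * ccq 5 P Q 1 * ccq 5 P Q 3 = (1/3) * ((Q 0)^2 * (P 1 * P 2 * Q 3 * Q 4 - P 3 * P 4 * Q 1 * Q 2)^2 + (Q 0)^2 * (P 1 * P 3 * Q 2 * Q 4 - P 2 * P 4 * Q 1 * Q 3)^2 + (Q 0)^2 * (P 1 * P 4 * Q 2 * Q 3 - P 2 * P 3 * Q 1 * Q 4)^2 + (Q 1)^2 * (P 0 * P 2 * Q 3 * Q 4 - P 3 * P 4 * Q 0 * Q 2)^2 + (Q 1)^2 * (P 0 * P 3 * Q 2 * Q 4 - P 2 * P 4 * Q 0 * Q 3)^2 + (Q 1)^2 * (P 0 * P 4 * Q 2 * Q 3 - P 2 * P 3 * Q 0 * Q 4)^2 + (Q 2)^2 * (P 0 * P 1 * Q 3 * Q 4 - P 3 * P 4 * Q 0 * Q 1)^2 +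 (Q 2)^2 * (P 0 * P 3 * Q 1 * Q 4 - P 1 * P 4 * Q 0 * Q 3)^2 + (Q 2)^2 * (P 0 * P 4 * Q 1 * Q 3 - P 1 * P 3 * Q 0 * Q 4)^2 + (Q 3)^2 * (P 0 * P 1 * Q 2 * Q 4 - P 2 * P 4 * Q 0 * Q 1)^2 + (Q 3)^2 * (P 0 * P 2 * Q 1 * Q 4 - P 1 * P 4 * Q 0 * Q 2)^2 + (Q 3)^2 * (P 0 * P 4 * Q 1 * Q 2 - P 1 * P 2 * Q 0 * Q 4)^2 + (Q 4)^2 * (P 0 * P 1 * Q 2 * Q 3 - P 2 * P 3 * Q 0 * Q 1)^2 + (Q 4)^2 * (P 0 * P 2 * Q 1 * Q 3 - P 1 * P 3 * Q 0 * Q 2)^2 + (Q 4)^2 * (P 0 * P 3 * Q 1 * Q 2 - P 1 * P 2 * Q 0 * Q 3)^2)"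
  by (simp add: numeral_eq_Suc) algebra
lemma N3: "ccq 5 P Q 3 ^ 2 - 2 * ccq 5 P Q 2 * ccq 5 P Q 4 = (1/3) * ((P 0)^2 * (Q 1 * Q 2 * P 3 * P 4 - Q 3 * Q 4 * P 1 * P 2)^2 + (P 0)^2 * (Q 1 * Q 3 * P 2 * P 4 - Q 2 * Q 4 * P 1 * P 3)^2 + (P 0)^2 * (Q 1 * Q 4 * P 2 * P 3 - Q 2 * Q 3 * P 1 * P 4)^2 + (P 1)^2 * (Q 0 * Q 2 * P 3 * P 4 - Q 3 * Q 4 * P 0 * P 2)^2 + (P 1)^2 * (Q 0 * Q 3 * P 2 * P 4 - Q 2 * Q 4 * P 0 * P 3)^2 + (P 1)^2 * (Q 0 * Q 4 * P 2 * P 3 - Q 2 * Q 3 * P 0 * P 4)^2 + (P 2)^2 * (Q 0 * Q 1 * P 3 * P 4 - Q 3 * Q 4 * P 0 * P 1)^2 + (P 2)^2 * (Q 0 * Q 3 * P 1 * P 4 - Q 1 * Q 4 * P 0 * P 3)^2 + (P 2)^2 * (Q 0 * Q 4 * P 1 * P 3 - Q 1 * Q 3 * P 0 * P 4)^2 + (P 3)^2 * (Q 0 * Q 1 * P 2 * P 4 - Q 2 * Q 4 * P 0 * P 1)^2 + (P 3)^2 * (Q 0 * Q 2 * P 1 * P 4 - Q 1 * Q 4 * P 0 * P 2)^2 + (P 3)^2 * (Q 0 * Q 4 * P 1 * P 2 - Q 1 * Q 2 * P 0 * P 4)^2 + (P 4)^2 * (Q 0 * Q 1 * P 2 * P 3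 - Q 2 * Q 3 * P 0 * P 1)^2 + (P 4)^2 * (Q 0 * Q 2 * P 1 * P 3 - Q 1 * Q 3 * P 0 * P 2)^2 + (P 4)^2 * (Q 0 * Q 3 * P 1 * P 2 - Q 1 * Q 2 * P 0 * P 3)^2)"
  by (simp add: numeral_eq_Suc) algebra

lemma newton5:
  assumes "1 \<le> k" "k \<le> 4"
  shows "2 * ccq 5 P Q (k-1) * ccq 5 P Q (k+1) \<le> ccq 5 P Q k ^ 2"
proof -
  have "k = 1 \<or> k = 2 \<or> k = 3 \<or> k = 4" using assms by auto
  then show ?thesis
  proof (elim disjE)
    assume k: "k = 1"
    have "0 \<le> ccq 5 P Q 1 ^ 2 - 2 * ccq 5 P Q 0 * ccq 5 P Q 2"
      unfolding N1 by (intro add_nonneg_nonneg mult_nonneg_nonneg zero_le_power2)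
    moreover have e: "k - 1 = 0" "k + 1 = 2" "k = 1" using k by auto
    ultimately show ?thesis unfolding e(1) e(2) unfolding e(3) by linarith
  next
    assume k: "k = 2"
    have "0 \<le> ccq 5 P Q 2 ^ 2 - 2 * ccq 5 P Q 1 * ccq 5 P Q 3"
      unfolding N2 by (intro add_nonneg_nonneg mult_nonneg_nonneg zero_le_power2) simp_all
    moreover have e: "k - 1 = 1" "k + 1 = 3" "k = 2" using k by auto
    ultimately show ?thesis unfolding e(1) e(2) unfolding e(3) by linarith
  next
    assume k: "k = 3"
    have "0 \<le> ccq 5 P Q 3 ^ 2 - 2 * ccq 5 P Q 2 * ccq 5 P Q 4"
      unfolding N3 by (intro add_nonneg_nonneg mult_nonneg_nonneg zero_le_power2) simp_all
    moreover have e: "k - 1 = 2" "k + 1 = 4" "k = 3" using k by auto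
    ultimately show ?thesis unfolding e(1) e(2) unfolding e(3) by linarith
  next
    assume k: "k = 4"
    have "0 \<le> ccq 5 P Q 4 ^ 2 - 2 * ccq 5 P Q 3 * ccq 5 P Q 5"
      unfolding N4 by (intro add_nonneg_nonneg mult_nonneg_nonneg zero_le_power2)
    moreover have e: "k - 1 = 3" "k + 1 = 5" "k = 4" using k by auto
    ultimately show ?thesis unfolding e(1) e(2) unfolding e(3) by linarith
  qed
qed


lemma key:
  fixes s :: "nat \<Rightarrow> real" and m0 j :: nat
  assumes nn: "\<And>k. 0 \<le> s k" and z: "\<And>k. 5 < k \<Longrightarrow> s k = 0"
    and newton: "\<And>k. 1 \<le> k \<Longrightarrow> k \<le> 4 \<Longrightarrow> 2 * s (k-1) * s (k+1) \<le> s k ^ 2"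
    and intv: "\<And>i j l. i \<le> j \<Longrightarrow> j \<le> l \<Longrightarrow> 0 < s i \<Longrightarrow> 0 < s l \<Longrightarrow> 0 < s j"
    and mx: "\<And>k. s k \<le> s m0" and pos: "0 < s m0"
    and j: "m0 + 2 \<le> j"
  shows "(\<Sum>k\<le>5. (if k \<le> j then s k / fact (j - k) else 0))
       \<le> (\<Sum>k\<le>5. (if k \<le> j - 1 then s k / fact (j - 1 - k) else 0))"
proof (cases "5 < j")
  case True
  show ?thesis
  proof (rule sum_mono)
    fix k assume "k \<in> {..(5::nat)}"
    then have k: "k \<le> j - 1" "k \<le> j" using True by auto
    have "fact (j - 1 - k) \<le> (fact (j - k) :: real)"
      by (rule fact_mono) auto
    moreover have "(0::real) < fact (j - 1 - k)" by simp
    ultimately have "s k / fact (j - k) \<le> s k / fact (j - 1 - k)"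
      using nn[of k] by (intro divide_left_mono) auto
    then show "(if k \<le> j then s k / fact (j - k) else 0) \<le> (if k \<le> j - 1 then s k / fact (j - 1 - k) else 0)"
      using k by simp
  qed
next
  case False
  have uni: "\<And>k. m0 \<le> k \<Longrightarrow> k < 5 \<Longrightarrow> s (k+1) \<le> s k"
  proof -
    fix k assume "m0 \<le> k" "k < 5"
    then show "s (k+1) \<le> s k"
    proof (induction k rule: dec_induct)
      case base
      then show ?case using mx by simp
    next
      case (step k)
      have IH: "s (k+1) \<le> s k" using step by simp
      have N: "2 * s k * s (k+2) \<le> s (k+1) ^ 2" using newton[of "k+1"] step by simp
      show ?case
      proof (cases "0 < s (k+1)")
        case True
        have sk: "0 < s k" using True IH by simp
        have "s (k+1) ^ 2 \<le> s k * s (k+1)" using IH True by (simp add: power2_eq_square)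
        then have "s k * (2 * s (k+2)) \<le> s k * s (k+1)" using N by (simp add: algebra_simps)
        then have "2 * s (k+2) \<le> s (k+1)" using sk by simp
        then show ?thesis using nn[of "k+2"] by simp
      next
        case False
        then have "s (k+1) = 0" using nn[of "k+1"] by simp
        moreover have "\<not> 0 < s (k+2)"
          using intv[of m0 "k+1" "k+2"] step pos \<open>s (k+1) = 0\<close> by auto
        ultimately show ?thesis using nn[of "k+2"] by simp
      qed
    qed
  qed
  have j5: "j \<le> 5" using False by simp
  have a: "s (j-1) \<le> s (j-2)" using uni[of "j-2"] j j5 by (simp add: numeral_2_eq_2 Suc_diff_Suc)
  have b: "s j \<le> s (j-1)" using uni[of "j-1"] j j5 by simp
  have N: "2 * s (j-2) * s j \<le> s (j-1) ^ 2" using newton[of "j-1"] j j5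
    by (simp add: numeral_2_eq_2 Suc_diff_Suc)
  have half: "2 * s j \<le> s (j-2)"
  proof (cases "0 < s (j-2)")
    case True
    have "s (j-1) ^ 2 \<le> s (j-2) ^ 2" using a nn[of "j-1"] by (rule power_mono)
    then have "s (j-2) * (2 * s j) \<le> s (j-2) * s (j-2)" using N by (simp add: power2_eq_square algebra_simps)
    then show ?thesis using True by simp
  next
    case False
    then show ?thesis using a b nn[of j] nn[of "j-2"] by simp
  qed
  have "j = 2 \<or> j = 3 \<or> j = 4 \<or> j = 5" using j j5 by auto
  then show ?thesis
  proof (elim disjE)
    assume jj: "j = 2"
    show ?thesis using half nn[of 0] nn[of 1] nn[of 2] unfolding jj
      by (simp add: atMost_Suc eval_nat_numeral fact_numeral)
  next
    assume jj: "j = 3"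
    show ?thesis using half nn[of 0] nn[of 1] nn[of 2] nn[of 3] unfolding jj
      by (simp add: atMost_Suc eval_nat_numeral fact_numeral)
  next
    assume jj: "j = 4"
    show ?thesis using half nn[of 0] nn[of 1] nn[of 2] nn[of 3] nn[of 4] unfolding jj
      by (simp add: atMost_Suc eval_nat_numeral fact_numeral)
  next
    assume jj: "j = 5"
    show ?thesis using half nn[of 0] nn[of 1] nn[of 2] nn[of 3] nn[of 4] nn[of 5] unfolding jj
      by (simp add: atMost_Suc eval_nat_numeral fact_numeral)
  qed
qed



theorem mainTheorem6:
  fixes n :: nat and p :: "nat \<Rightarrow> real" and m0 m1 :: nat
  assumes "0 < n" and "n \<le> 5"
    and "\<And>i. i < n \<Longrightarrow> 0 \<le> p i \<and> p i \<le> 1"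
    and "is_mode (plus_poisson1_pmf (bern_sum_pmf n p)) m1"
    and "\<And>m. is_mode (plus_poisson1_pmf (bern_sum_pmf n p)) m \<Longrightarrow> m = m1"
    and "is_mode (bern_sum_pmf n p) m0"
  shows "m1 \<le> m0 + 1"
  proof (rule ccontr)
  assume contra: "\<not> m1 \<le> m0 + 1"
  define q where "q i = (if i < n then p i else 0)" for i
  define s where "s k = ccq 5 q (\<lambda>i. 1 - q i) k" for k
  let ?S = "bern_sum_pmf n p"
  have q01: "\<And>i. 0 \<le> q i \<and> q i \<le> 1" using assms(3) by (simp add: q_def)
  have sS: "\<And>k. pmf ?S k = s k"
  proof -
    fix k
    have "pmf ?S k = ccq n p (\<lambda>i. 1 - p i) k" by (rule pmf_bern) (use assms(3) in auto)
    also have "\<dots> = ccq n q (\<lambda>i. 1 - q i) k" by (rule ccq_cong) (simp add: q_def)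
    also have "\<dots> = s k" unfolding s_def by (rule ccq_pad[symmetric]) (use assms(2) in \<open>auto simp: q_def\<close>)
    finally show "pmf ?S k = s k" .
  qed
  have nn: "\<And>k. 0 \<le> s k" unfolding s_def by (rule ccq_nonneg) (use q01 in auto)
  have z: "\<And>k. 5 < k \<Longrightarrow> s k = 0" unfolding s_def by (rule ccq_zero)
  have newton: "\<And>k. 1 \<le> k \<Longrightarrow> k \<le> 4 \<Longrightarrow> 2 * s (k-1) * s (k+1) \<le> s k ^ 2"
    unfolding s_def by (rule newton5)
  obtain a b where ab: "\<And>k. 0 < s k \<longleftrightarrow> a \<le> k \<and> k \<le> b"
    using ccq_interval[of q 5] q01 unfolding s_def by blast
  have intv: "\<And>i j l. i \<le> j \<Longrightarrow> j \<le> l \<Longrightarrow> 0 < s i \<Longrightarrow> 0 < s l \<Longrightarrow> 0 < s j"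
    using ab by (meson order_trans)
  have mx: "\<And>k. s k \<le> s m0" using assms(6) unfolding is_mode_def sS by blast
  obtain x where "x \<in> set_pmf ?S" using set_pmf_not_empty by fast
  then have "0 < s x" using sS by (metis pmf_positive)
  then have pos: "0 < s m0" using mx[of x] by simp
  have T: "\<And>j. pmf (plus_poisson1_pmf ?S) j = exp (-1) * (\<Sum>k\<le>5. (if k \<le> j then s k / fact (j - k) else 0))"
  proof -
    fix j
    have "pmf (plus_poisson1_pmf ?S) j = (\<Sum>a\<le>5. pmf (map_pmf (\<lambda>z. a + z) (poisson_pmf 1)) j * pmf ?S a)"
      unfolding plus_poisson1_pmf_def pmf_bind
    proof (rule integral_measure_pmf_real)
      fix a assume "a \<in> set_pmf ?S"
      then have "pmf ?S a \<noteq> 0" by (simp add: set_pmf_eq)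
      then show "a \<in> {..5}" using z[of a] sS[of a] by (cases "5 < a") auto
    qed simp
    also have "\<dots> = exp (-1) * (\<Sum>k\<le>5. (if k \<le> j then s k / fact (j - k) else 0))"
      unfolding sum_distrib_left
      by (rule sum.cong) (simp_all add: pmf_map_add pmf_poisson sS)
    finally show "pmf (plus_poisson1_pmf ?S) j = exp (-1) * (\<Sum>k\<le>5. (if k \<le> j then s k / fact (j - k) else 0))" .
  qed
  have j: "m0 + 2 \<le> m1" using contra by simp
  have le: "pmf (plus_poisson1_pmf ?S) m1 \<le> pmf (plus_poisson1_pmf ?S) (m1 - 1)"
    unfolding T using key[OF nn z newton intv mx pos j] by simp
  have ge: "pmf (plus_poisson1_pmf ?S) (m1 - 1) \<le> pmf (plus_poisson1_pmf ?S) m1"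
    using assms(4) unfolding is_mode_def by blast
  have "is_mode (plus_poisson1_pmf ?S) (m1 - 1)"
    using assms(4) le ge unfolding is_mode_def by (metis order_trans antisym)
  then have "m1 - 1 = m1" by (rule assms(5))
  then show False using j by simp
qed

end
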